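(* Let $N\ge1$ and let $F=(f_1,\ldots,f_N):\{0,1\}^N\to\{0,1\}^N$ be a synchronously updated linear Boolean network, where each $f_i(\mathbf x)=\sum_{j\in S_i}x_j \pmod 2$ for a subset $S_i\subseteq\{1,\dots,N\}$ of size $n_i$ (the in-degree of node $i$). For $1\le m\le N$, let $(\mathbf x,\mathbf y)$ be a uniformly random pair of states in $\{0,1\}^N$ with Hamming distance $d(\mathbf x,\mathbf y)=m$. Then $$D(F,m) := \mathbb{E}\Big[d\big(F(\mathbf x),F(\mathbf y)\big) \ \big| \ d(\mathbf x,\mathbf y) = m\Big] = \sum_{i=1}^N\mathbb{P}\left(f_i(\mathbf x) \neq f_i(\mathbf y) \ \big| \ d(\mathbf x,\mathbf y) =m \right) = \sum_{i=1}^N \sum_{\substack{1\le c\le m\\ c\text{ odd}}} H_{N,m,n_i}(c),$$ where $$H_{N,m,n_i}(c) = \frac{\binom mc \binom{N-m}{n_i-c}}{\binom N{n_i}} = \frac{\binom {n_i}c \binom{N-n_i}{m-c}}{\binom N{m}}$$ is the hypergeometric probability mass function.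
   Context: $d(\cdot,\cdot)$ denotes Hamming distance on $\{0,1\}^N$. Binomial coefficients $\binom ab$ are taken to be $0$ when $b<0$ or $b>a$. The quantity $D(F,m)$ is called the Derrida value of $F$ at $m$. *)

theory Defs
  imports "HOL-Probability.Probability"
begin

text \<open>Nodes are indexed by 0..<N (instead of 1..N). A state is a function
  nat => bool that is False outside {0..<N}.\<close>

definition states :: "nat \<Rightarrow> (nat \<Rightarrow> bool) set" where
  "states N = {0..<N} \<rightarrow>\<^sub>E (UNIV :: bool set)"

definition hamming :: "nat \<Rightarrow> (nat \<Rightarrow> bool) \<Rightarrow> (nat \<Rightarrow> bool) \<Rightarrow> nat" where
  "hamming N x y = card {i \<in> {0..<N}. x i \<noteq> y i}"

definition lin_node :: "nat set \<Rightarrow> (nat \<Rightarrow> bool) \<Rightarrow> bool" where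
  "lin_node T x = odd (card {j \<in> T. x j})"

definition lin_net :: "nat \<Rightarrow> (nat \<Rightarrow> nat set) \<Rightarrow> (nat \<Rightarrow> bool) \<Rightarrow> (nat \<Rightarrow> bool)" where
  "lin_net N S x = (\<lambda>i. if i < N then lin_node (S i) x else False)"

definition pairs_at :: "nat \<Rightarrow> nat \<Rightarrow> ((nat \<Rightarrow> bool) \<times> (nat \<Rightarrow> bool)) set" where
  "pairs_at N m = {(x, y). x \<in> states N \<and> y \<in> states N \<and> hamming N x y = m}"

definition derrida :: "nat \<Rightarrow> ((nat \<Rightarrow> bool) \<Rightarrow> (nat \<Rightarrow> bool)) \<Rightarrow> nat \<Rightarrow> real" where
  "derrida N F m = measure_pmf.expectation (pmf_of_set (pairs_at N m))
      (\<lambda>(x, y). real (hamming N (F x) (F y)))"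

text \<open>Hypergeometric pmf, with binomial coefficients treated as 0 for negative lower index.\<close>
definition hyper1 :: "nat \<Rightarrow> nat \<Rightarrow> nat \<Rightarrow> nat \<Rightarrow> real" where
  "hyper1 N m n c = (if c \<le> n then real (m choose c) * real ((N - m) choose (n - c)) / real (N choose n) else 0)"

definition hyper2 :: "nat \<Rightarrow> nat \<Rightarrow> nat \<Rightarrow> nat \<Rightarrow> real" where
  "hyper2 N m n c = (if c \<le> m then real (n choose c) * real ((N - n) choose (m - c)) / real (N choose m) else 0)"

end

theory Submission
  imports Defs
begin

lemma hyper_eq:
  assumes "n \<le> N" "m \<le> N" "c \<le> m"
  shows "hyper1 N m n c = hyper2 N m n c"
proof (cases "c \<le> n")
  case False
  then show ?thesis using assms by (simp add: hyper1_def hyper2_def)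
next
  case True
  define a where "a = m - c"
  define b where "b = n - c"
  define M where "M = N - c"
  have key: "(N choose m) * (m choose c) * ((N - m) choose (n - c))
        = (N choose n) * (n choose c) * ((N - n) choose (m - c))"
  proof -
    have e1: "(N choose m) * (m choose c) = (N choose c) * (M choose a)"
      using choose_mult[of c m N] assms unfolding M_def a_def by simp
    have e2: "(N choose n) * (n choose c) = (N choose c) * (M choose b)"
      using choose_mult[of c n N] assms True unfolding M_def b_def by simp
    have nm: "N - m = M - a" "N - n = M - b" using assms True unfolding M_def a_def b_def by auto
    have e3: "(M choose a) * ((M - a) choose b) = (M choose b) * ((M - b) choose a)"
    proof (cases "a + b \<le> M")
      case True
      have "(M choose (a+b)) * ((a+b) choose a) = (M choose a) * ((M - a) choose b)"
        using choose_mult[of a "a+b" M] True by simp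
      moreover have "(M choose (a+b)) * ((a+b) choose b) = (M choose b) * ((M - b) choose a)"
        using choose_mult[of b "a+b" M] True by simp
      moreover have "((a+b) choose a) = ((a+b) choose b)"
        using binomial_symmetric[of a "a+b"] by simp
      ultimately show ?thesis by simp
    next
      case False
      then show ?thesis by (cases "a \<le> M"; cases "b \<le> M") (auto simp: binomial_eq_0)
    qed
    have "(N choose m) * (m choose c) * ((N - m) choose (n - c)) = (N choose c) * ((M choose a) * ((M - a) choose b))"
      using e1 nm by (simp add: b_def)
    also have "\<dots> = (N choose c) * ((M choose b) * ((M - b) choose a))" using e3 by simp
    also have "\<dots> = (N choose n) * (n choose c) * ((N - n) choose (m - c))" using e2 nm by (simp add: a_def)
    finally show ?thesis .
  qed
  have pos: "real (N choose m) \<noteq> 0" "real (N choose n) \<noteq> 0" using assms by auto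
  have key2: "(m choose c) * ((N - m) choose (n - c)) * (N choose m)
        = (n choose c) * ((N - n) choose (m - c)) * (N choose n)"
    using key by (simp add: ac_simps)
  have k2: "real (m choose c) * real ((N - m) choose (n - c)) * real (N choose m)
        = real (n choose c) * real ((N - n) choose (m - c)) * real (N choose n)"
    using arg_cong[OF key2, of real] by (simp only: of_nat_mult)
  have "real (m choose c) * real ((N - m) choose (n - c)) / real (N choose n)
      = real (n choose c) * real ((N - n) choose (m - c)) / real (N choose m)"
    by (rule iffD2[OF frac_eq_eq[OF pos(2) pos(1)] k2])
  then show ?thesis using True assms by (simp add: hyper1_def hyper2_def)
qed


lemma card_states: "card (states N) = 2 ^ N"
  by (simp add: states_def card_PiE)

lemma finite_states: "finite (states N)"
  by (simp add: states_def finite_PiE)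

lemma diff_bij:
  assumes x: "x \<in> states N"
  shows "bij_betw (\<lambda>y. {i\<in>{0..<N}. x i \<noteq> y i}) (states N) (Pow {0..<N})"
proof (rule bij_betw_byWitness[where f'="\<lambda>D i. if i \<in> {0..<N} then (x i \<noteq> (i \<in> D)) else undefined"])
  show "\<forall>a\<in>states N. (\<lambda>i. if i \<in> {0..<N} then x i \<noteq> (i \<in> {i \<in> {0..<N}. x i \<noteq> a i}) else undefined) = a"
  proof
    fix a assume a: "a \<in> states N"
    show "(\<lambda>i. if i \<in> {0..<N} then x i \<noteq> (i \<in> {i \<in> {0..<N}. x i \<noteq> a i}) else undefined) = a"
    proof
      fix i show "(if i \<in> {0..<N} then x i \<noteq> (i \<in> {i \<in> {0..<N}. x i \<noteq> a i}) else undefined) = a i"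
      proof (cases "i \<in> {0..<N}")
        case True then show ?thesis by (cases "x i"; cases "a i") simp_all
      next
        case False
        then have "a i = undefined" using a unfolding states_def by (rule PiE_arb[rotated])
        then show ?thesis using False by simp
      qed
    qed
  qed
  show "\<forall>a'\<in>Pow {0..<N}. {i \<in> {0..<N}. x i \<noteq> (if i \<in> {0..<N} then x i \<noteq> (i \<in> a') else undefined)} = a'"
    by auto
  show "(\<lambda>y. {i \<in> {0..<N}. x i \<noteq> y i}) ` states N \<subseteq> Pow {0..<N}" by auto
  show "(\<lambda>D i. if i \<in> {0..<N} then x i \<noteq> (i \<in> D) else undefined) ` Pow {0..<N} \<subseteq> states N"
    by (auto simp: states_def)
qed


lemma inner_card:
  assumes x: "x \<in> states N"
  shows "card {y \<in> states N. Q {i\<in>{0..<N}. x i \<noteq> y i}} = card {D. D \<subseteq> {0..<N} \<and> Q D}"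
proof -
  have "bij_betw (\<lambda>y. {i\<in>{0..<N}. x i \<noteq> y i}) {y \<in> states N. Q {i\<in>{0..<N}. x i \<noteq> y i}} {D. D \<subseteq> {0..<N} \<and> Q D}"
  proof (rule bij_betw_subset[OF diff_bij[OF x]])
    show "{y \<in> states N. Q {i \<in> {0..<N}. x i \<noteq> y i}} \<subseteq> states N" by auto
    show "(\<lambda>y. {i \<in> {0..<N}. x i \<noteq> y i}) ` {y \<in> states N. Q {i \<in> {0..<N}. x i \<noteq> y i}} = {D. D \<subseteq> {0..<N} \<and> Q D}"
    proof
      show "(\<lambda>y. {i \<in> {0..<N}. x i \<noteq> y i}) ` {y \<in> states N. Q {i \<in> {0..<N}. x i \<noteq> y i}} \<subseteq> {D. D \<subseteq> {0..<N} \<and> Q D}"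
        by auto
      show "{D. D \<subseteq> {0..<N} \<and> Q D} \<subseteq> (\<lambda>y. {i \<in> {0..<N}. x i \<noteq> y i}) ` {y \<in> states N. Q {i \<in> {0..<N}. x i \<noteq> y i}}"
      proof
        fix D assume D: "D \<in> {D. D \<subseteq> {0..<N} \<and> Q D}"
        then have "D \<in> Pow {0..<N}" by auto
        then obtain y where y: "y \<in> states N" "D = {i \<in> {0..<N}. x i \<noteq> y i}"
          using diff_bij[OF x] unfolding bij_betw_def by blast
        then show "D \<in> (\<lambda>y. {i \<in> {0..<N}. x i \<noteq> y i}) ` {y \<in> states N. Q {i \<in> {0..<N}. x i \<noteq> y i}}"
          using D by auto
      qed
    qed
  qed
  then show ?thesis by (rule bij_betw_same_card)
qed

lemma pairs_card:
  "card {(x,y). x \<in> states N \<and> y \<in> states N \<and> Q {i\<in>{0..<N}. x i \<noteq> y i}}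
     = 2 ^ N * card {D. D \<subseteq> {0..<N} \<and> Q D}"
proof -
  have "{(x,y). x \<in> states N \<and> y \<in> states N \<and> Q {i\<in>{0..<N}. x i \<noteq> y i}}
      = Sigma (states N) (\<lambda>x. {y \<in> states N. Q {i\<in>{0..<N}. x i \<noteq> y i}})" by auto
  then have "card {(x,y). x \<in> states N \<and> y \<in> states N \<and> Q {i\<in>{0..<N}. x i \<noteq> y i}}
      = (\<Sum>x\<in>states N. card {y \<in> states N. Q {i\<in>{0..<N}. x i \<noteq> y i}})"
    using finite_states by (simp add: card_SigmaI)
  also have "\<dots> = (\<Sum>x\<in>states N. card {D. D \<subseteq> {0..<N} \<and> Q D})"
    by (rule sum.cong[OF refl], rule inner_card)
  finally show ?thesis by (simp add: card_states)
qed

lemma parity_arith: "((odd ((a::nat) + k)) \<noteq> odd (b + k)) = odd (a + b)"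
  by auto

lemma parity:
  assumes "finite T"
  shows "(lin_node T x \<noteq> lin_node T y) = odd (card {j \<in> T. x j \<noteq> y j})"
proof -
  define A where "A = {j \<in> T. x j}"
  define B where "B = {j \<in> T. y j}"
  have fA: "finite A" "finite B" using assms by (auto simp: A_def B_def)
  have eq: "{j \<in> T. x j \<noteq> y j} = (A - B) \<union> (B - A)" by (auto simp: A_def B_def)
  have c1: "card {j \<in> T. x j \<noteq> y j} = card (A - B) + card (B - A)"
    unfolding eq using fA by (subst card_Un_disjoint) auto
  have c2: "card A = card (A - B) + card (A \<inter> B)" using card_Int_Diff[OF fA(1), of B] by simp
  have c3: "card B = card (B - A) + card (A \<inter> B)" using card_Int_Diff[OF fA(2), of A] by (simp add: Int_commute)
  have l: "lin_node T x = odd (card A)" "lin_node T y = odd (card B)"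
    by (simp_all add: lin_node_def A_def B_def)
  show ?thesis unfolding l c1 c2 c3 by (rule parity_arith)
qed

lemma split_card:
  assumes T: "T \<subseteq> {0..<N}" and c: "c \<le> m"
  shows "card {D. D \<subseteq> {0..<N} \<and> card D = m \<and> card (D \<inter> T) = c}
       = (card T choose c) * ((N - card T) choose (m - c))"
proof -
  have fT: "finite T" using T finite_subset by blast
  define X where "X = {D. D \<subseteq> {0..<N} \<and> card D = m \<and> card (D \<inter> T) = c}"
  define Y where "Y = {A. A \<subseteq> T \<and> card A = c} \<times> {B. B \<subseteq> {0..<N} - T \<and> card B = m - c}"
  define f where "f = (\<lambda>D. (D \<inter> T, D - T))"
  define g where "g = (\<lambda>p::nat set \<times> nat set. fst p \<union> snd p)"
  have h1: "\<forall>a\<in>X. g (f a) = a" by (auto simp: f_def g_def)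
  have h2: "\<forall>a\<in>Y. f (g a) = a" by (auto simp: f_def g_def Y_def)
  have h3: "f ` X \<subseteq> Y"
  proof
    fix p assume "p \<in> f ` X"
    then obtain D where D: "D \<subseteq> {0..<N}" "card D = m" "card (D \<inter> T) = c" and p: "p = f D"
      by (auto simp: X_def)
    have fD: "finite D" using D finite_subset by blast
    have "card D = card (D \<inter> T) + card (D - T)"
      using fD by (rule card_Int_Diff)
    then show "p \<in> Y" using D p by (auto simp: Y_def f_def)
  qed
  have h4: "g ` Y \<subseteq> X"
  proof
    fix p assume "p \<in> g ` Y"
    then obtain A B where A: "A \<subseteq> T" "card A = c" and B: "B \<subseteq> {0..<N} - T" "card B = m - c"
       and p: "p = A \<union> B"
      by (auto simp: Y_def g_def)
    have fA: "finite A" using A fT finite_subset by blast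
    have fB: "finite B" using B finite_subset by (metis finite_Diff finite_atLeastLessThan)
    have dj: "A \<inter> B = {}" using A B by auto
    have "(A \<union> B) \<inter> T = A" using A B by auto
    moreover have "card (A \<union> B) = card A + card B" using card_Un_disjoint[OF fA fB dj] .
    ultimately show "p \<in> X"
      using A B T c p by (auto simp: X_def)
  qed
  have "bij_betw f X Y" by (rule bij_betw_byWitness[OF h1 h2 h3 h4])
  then have "card X = card {A. A \<subseteq> T \<and> card A = c} * card {B. B \<subseteq> {0..<N} - T \<and> card B = m - c}"
    by (simp add: bij_betw_same_card card_cartesian_product Y_def)
  also have "\<dots> = (card T choose c) * ((N - card T) choose (m - c))"
    using fT T by (simp add: n_subsets card_Diff_subset)
  finally show ?thesis by (simp add: X_def)
qed


lemma odd_ge1: "odd (k::nat) \<Longrightarrow> Suc 0 \<le> k"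
  by (cases k) auto

lemma indicator_sum_card:
  "finite A \<Longrightarrow> (\<Sum>p\<in>A. if p \<in> E then 1 else 0 :: real) = real (card (A \<inter> E))"
  by (simp add: sum.inter_restrict[symmetric])

lemma pairs_at_eq:
  "pairs_at N m = {(x,y). x \<in> states N \<and> y \<in> states N \<and> card {i\<in>{0..<N}. x i \<noteq> y i} = m}"
  by (auto simp: pairs_at_def hamming_def)

lemma card_pairs_at: "m \<le> N \<Longrightarrow> card (pairs_at N m) = 2 ^ N * (N choose m)"
  unfolding pairs_at_eq pairs_card[where Q="\<lambda>D. card D = m"]
  by (simp add: n_subsets)

lemma finite_pairs_at: "finite (pairs_at N m)"
proof -
  have "pairs_at N m \<subseteq> states N \<times> states N" by (auto simp: pairs_at_def)
  then show ?thesis using finite_states finite_subset by blast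
qed

lemma event_card:
  assumes T: "T \<subseteq> {0..<N}"
  shows "card (pairs_at N m \<inter> {(x, y). lin_node T x \<noteq> lin_node T y})
     = 2 ^ N * (\<Sum>c\<in>{c. 1 \<le> c \<and> c \<le> m \<and> odd c}. (card T choose c) * ((N - card T) choose (m - c)))"
proof -
  have fT: "finite T" using T finite_subset by blast
  have evt: "pairs_at N m \<inter> {(x, y). lin_node T x \<noteq> lin_node T y}
      = {(x,y). x \<in> states N \<and> y \<in> states N \<and> (\<lambda>D. card D = m \<and> odd (card (D \<inter> T))) {i\<in>{0..<N}. x i \<noteq> y i}}"
  proof -
    have dj: "\<And>x y. {j \<in> T. x j \<noteq> y j} = {i\<in>{0..<N}. x i \<noteq> y i} \<inter> T" using T by auto
    show ?thesis
    proof (rule set_eqI)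
      fix p :: "(nat \<Rightarrow> bool) \<times> (nat \<Rightarrow> bool)"
      obtain x y where p: "p = (x,y)" by (cases p)
      have "(lin_node T x \<noteq> lin_node T y) = odd (card ({i\<in>{0..<N}. x i \<noteq> y i} \<inter> T))"
        using parity[OF fT, of x y] dj[of x y] by simp
      then show "p \<in> pairs_at N m \<inter> {(x, y). lin_node T x \<noteq> lin_node T y} \<longleftrightarrow>
        p \<in> {(x,y). x \<in> states N \<and> y \<in> states N \<and> (\<lambda>D. card D = m \<and> odd (card (D \<inter> T))) {i\<in>{0..<N}. x i \<noteq> y i}}"
        unfolding p pairs_at_eq by simp
    qed
  qed
  have "card (pairs_at N m \<inter> {(x, y). lin_node T x \<noteq> lin_node T y})
     = 2 ^ N * card {D. D \<subseteq> {0..<N} \<and> card D = m \<and> odd (card (D \<inter> T))}"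
    unfolding evt by (rule pairs_card[where Q="\<lambda>D. card D = m \<and> odd (card (D \<inter> T))"])
  also have "{D. D \<subseteq> {0..<N} \<and> card D = m \<and> odd (card (D \<inter> T))}
      = (\<Union>c\<in>{c. 1 \<le> c \<and> c \<le> m \<and> odd c}. {D. D \<subseteq> {0..<N} \<and> card D = m \<and> card (D \<inter> T) = c})"
  proof -
    have "\<And>D. D \<subseteq> {0..<N} \<Longrightarrow> card (D \<inter> T) \<le> card D"
      by (meson card_mono finite_Int finite_atLeastLessThan finite_subset inf_le1)
    then show ?thesis by (auto intro: odd_ge1)
  qed
  also have "card \<dots> = (\<Sum>c\<in>{c. 1 \<le> c \<and> c \<le> m \<and> odd c}. card {D. D \<subseteq> {0..<N} \<and> card D = m \<and> card (D \<inter> T) = c})"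
    by (rule card_UN_disjoint) auto
  also have "\<dots> = (\<Sum>c\<in>{c. 1 \<le> c \<and> c \<le> m \<and> odd c}. (card T choose c) * ((N - card T) choose (m - c)))"
    by (rule sum.cong[OF refl]) (auto intro: split_card[OF T])
  finally show ?thesis .
qed



theorem mainTheorem2:
  fixes N m :: nat and S :: "nat \<Rightarrow> nat set"
  assumes "N \<ge> 1"
    and "\<forall>i<N. S i \<subseteq> {0..<N}"
    and "1 \<le> m" and "m \<le> N"
  shows "derrida N (lin_net N S) m
           = (\<Sum>i<N. measure_pmf.prob (pmf_of_set (pairs_at N m))
                        {(x, y). lin_node (S i) x \<noteq> lin_node (S i) y})
       \<and> (\<Sum>i<N. measure_pmf.prob (pmf_of_set (pairs_at N m))
                        {(x, y). lin_node (S i) x \<noteq> lin_node (S i) y})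
           = (\<Sum>i<N. \<Sum>c\<in>{c. 1 \<le> c \<and> c \<le> m \<and> odd c}. hyper1 N m (card (S i)) c)
       \<and> (\<forall>i<N. \<forall>c\<le>m. hyper1 N m (card (S i)) c = hyper2 N m (card (S i)) c)"
proof -
  define P where "P = pairs_at N m"
  define E where "E = (\<lambda>i. {(x, y). lin_node (S i) x \<noteq> lin_node (S i) y})"
  have finP: "finite P" unfolding P_def by (rule finite_pairs_at)
  have cardP: "card P = 2 ^ N * (N choose m)" unfolding P_def using assms by (simp add: card_pairs_at)
  have cpos: "card P > 0" using cardP assms by simp
  then have neP: "P \<noteq> {}" by auto
  have cardS: "card (S i) \<le> N" if "i < N" for i
    using assms(2) that by (metis card_atLeastLessThan card_mono finite_atLeastLessThan diff_zero)
  have H: "\<forall>i<N. \<forall>c\<le>m. hyper1 N m (card (S i)) c = hyper2 N m (card (S i)) c"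
    using cardS assms hyper_eq by auto
  have prob: "measure_pmf.prob (pmf_of_set P) (E i) = real (card (P \<inter> E i)) / real (card P)" for i
    using finP neP by (simp add: measure_pmf_of_set)
  have part1: "derrida N (lin_net N S) m = (\<Sum>i<N. measure_pmf.prob (pmf_of_set P) (E i))"
  proof -
    have hp: "real (hamming N (lin_net N S x) (lin_net N S y)) = (\<Sum>i<N. if (x,y) \<in> E i then 1 else 0)" for x y
    proof -
      have "{i \<in> {0..<N}. lin_net N S x i \<noteq> lin_net N S y i} = {..<N} \<inter> {i. (x,y) \<in> E i}"
        by (auto simp: lin_net_def E_def)
      then show ?thesis by (simp add: hamming_def sum.If_cases)
    qed
    have "derrida N (lin_net N S) m = (\<Sum>p\<in>P. real (hamming N (lin_net N S (fst p)) (lin_net N S (snd p)))) / card P"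
      unfolding derrida_def P_def[symmetric] using finP neP
      by (simp add: integral_pmf_of_set case_prod_beta)
    also have "\<dots> = (\<Sum>p\<in>P. \<Sum>i<N. if p \<in> E i then 1 else 0) / card P"
      using hp by simp
    also have "\<dots> = (\<Sum>i<N. \<Sum>p\<in>P. if p \<in> E i then 1 else 0) / card P"
      by (subst sum.swap) simp
    also have "\<dots> = (\<Sum>i<N. real (card (P \<inter> E i)) / card P)"
      by (simp only: indicator_sum_card[OF finP] sum_divide_distrib)
    finally show ?thesis by (simp add: prob)
  qed
  have part2: "(\<Sum>i<N. measure_pmf.prob (pmf_of_set P) (E i))
      = (\<Sum>i<N. \<Sum>c\<in>{c. 1 \<le> c \<and> c \<le> m \<and> odd c}. hyper1 N m (card (S i)) c)"
  proof (rule sum.cong[OF refl])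
    fix i assume "i \<in> {..<N}"
    then have i: "i < N" by simp
    have "measure_pmf.prob (pmf_of_set P) (E i)
       = real (2 ^ N * (\<Sum>c\<in>{c. 1 \<le> c \<and> c \<le> m \<and> odd c}. (card (S i) choose c) * ((N - card (S i)) choose (m - c))))
         / real (2 ^ N * (N choose m))"
      unfolding prob cardP unfolding P_def E_def using event_card assms(2) i by simp
    also have "\<dots> = (\<Sum>c\<in>{c. 1 \<le> c \<and> c \<le> m \<and> odd c}. real ((card (S i) choose c) * ((N - card (S i)) choose (m - c))) / real (N choose m))"
      by (simp add: sum_divide_distrib)
    also have "\<dots> = (\<Sum>c\<in>{c. 1 \<le> c \<and> c \<le> m \<and> odd c}. hyper2 N m (card (S i)) c)"
      by (rule sum.cong[OF refl]) (auto simp: hyper2_def)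
    also have "\<dots> = (\<Sum>c\<in>{c. 1 \<le> c \<and> c \<le> m \<and> odd c}. hyper1 N m (card (S i)) c)"
      using H i by (intro sum.cong[OF refl]) auto
    finally show "measure_pmf.prob (pmf_of_set P) (E i) = (\<Sum>c\<in>{c. 1 \<le> c \<and> c \<le> m \<and> odd c}. hyper1 N m (card (S i)) c)" .
  qed
  show ?thesis using part1 part2 H unfolding P_def E_def by simp
qed

end
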